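(* Let $(A,\leq,\cdot,/)$ be a right-residuated magma satisfying condition (N). Then: (1) for every $x\in A$, $x/x$ is a maximal element of $(A,\leq)$; (2) $((x/x)y)/y = x/x$ for all $x,y\in A$; (3) if $(A,\leq)$ has a top element, then $x/x$ equals this top element for every $x\in A$.
   Context: Write $xy$ for $x\cdot y$; $\cdot$ binds more strongly than $/$, and $/$ binds more strongly than $\sqcap$, where $x\sqcap y := (x/y)y$. A right-residuated magma is a structure $(A,\leq,\cdot,/)$ where $(A,\leq)$ is a poset and $xy\leq z\iff x\leq z/y$ for all $x,y,z\in A$. Condition (N): for all $x,y\in A$, $x\leq y\iff x = y\sqcap x$. *)

theory Defs
  imports Main
begin

definition right_residuated_magma ::
  "('a \<Rightarrow> 'a \<Rightarrow> bool) \<Rightarrow> ('a \<Rightarrow> 'a \<Rightarrow> 'a) \<Rightarrow> ('a \<Rightarrow> 'a \<Rightarrow> 'a) \<Rightarrow> bool" where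
  "right_residuated_magma le mult rdiv \<longleftrightarrow>
     partial_order_on UNIV {(x, y). le x y} \<and>
     (\<forall>x y z. le (mult x y) z \<longleftrightarrow> le x (rdiv z y))"

definition rmeet :: "('a \<Rightarrow> 'a \<Rightarrow> 'a) \<Rightarrow> ('a \<Rightarrow> 'a \<Rightarrow> 'a) \<Rightarrow> 'a \<Rightarrow> 'a \<Rightarrow> 'a" where
  "rmeet mult rdiv x y = mult (rdiv x y) y"

definition condition_N ::
  "('a \<Rightarrow> 'a \<Rightarrow> bool) \<Rightarrow> ('a \<Rightarrow> 'a \<Rightarrow> 'a) \<Rightarrow> ('a \<Rightarrow> 'a \<Rightarrow> 'a) \<Rightarrow> bool" where
  "condition_N le mult rdiv \<longleftrightarrow> (\<forall>x y. le x y \<longleftrightarrow> x = rmeet mult rdiv y x)"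

definition is_maximal :: "('a \<Rightarrow> 'a \<Rightarrow> bool) \<Rightarrow> 'a \<Rightarrow> bool" where
  "is_maximal le m \<longleftrightarrow> (\<forall>z. le m z \<longrightarrow> z = m)"

definition is_top :: "('a \<Rightarrow> 'a \<Rightarrow> bool) \<Rightarrow> 'a \<Rightarrow> bool" where
  "is_top le t \<longleftrightarrow> (\<forall>z. le z t)"

end

theory Submission
  imports Defs
begin

theorem mainTheorem6:
  fixes le :: "'a \<Rightarrow> 'a \<Rightarrow> bool" and mult rdiv :: "'a \<Rightarrow> 'a \<Rightarrow> 'a"
  assumes "right_residuated_magma le mult rdiv"
    and "condition_N le mult rdiv"
  shows "(\<forall>x. is_maximal le (rdiv x x))
       \<and> (\<forall>x y. rdiv (mult (rdiv x x) y) y = rdiv x x)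
       \<and> (\<forall>t. is_top le t \<longrightarrow> (\<forall>x. rdiv x x = t))"
proof -
  have po: "partial_order_on UNIV {(x, y). le x y}"
    and res: "\<And>x y z. le (mult x y) z \<longleftrightarrow> le x (rdiv z y)"
    using assms(1) unfolding right_residuated_magma_def by auto
  have refl: "\<And>x. le x x" using po
    unfolding partial_order_on_def preorder_on_def refl_on_def by auto
  have anti: "\<And>x y. le x y \<Longrightarrow> le y x \<Longrightarrow> x = y" using po
    unfolding partial_order_on_def antisym_def by auto
  have tr: "\<And>x y z. le x y \<Longrightarrow> le y z \<Longrightarrow> le x z" using po
    unfolding partial_order_on_def preorder_on_def trans_def by blast
  have N: "\<And>x y. le x y \<longleftrightarrow> x = mult (rdiv y x) x"
    using assms(2) unfolding condition_N_def rmeet_def by auto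
  have mx: "\<And>x z. le (rdiv x x) z \<Longrightarrow> z = rdiv x x"
  proof -
    fix x z assume h: "le (rdiv x x) z"
    show "z = rdiv x x" by (metis h N res anti refl tr)
  qed
  have p2: "\<And>x y. rdiv (mult (rdiv x x) y) y = rdiv x x"
    by (metis res mx refl)
  show ?thesis
    unfolding is_maximal_def is_top_def using mx p2 by metis
qed

end
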